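(* Let $q > 2$ be an integer. A generalized quadrangle of order $(q, q^2-q)$ whose automorphism group acts transitively on its points does not possess an ovoid.
   Context: A generalized quadrangle of order $(s,t)$ consists of a set $P$ of points, a set $L$ of lines and an incidence relation such that every point lies on exactly $t+1$ lines, every line contains exactly $s+1$ points, and for every point $p$ and line $l$ not containing $p$ there is a unique point $p'$ on $l$ and a unique line $l'$ containing both $p$ and $p'$. Its point graph has vertex set $P$, two distinct points adjacent iff collinear. An ovoid is a Delsarte coclique of the point graph: a set of pairwise non-collinear points of size $\frac{ve^-}{e^- - k}$, where $v,k,e^-$ are the number of vertices, the valency, and the smallest eigenvalue of the point graph (for order $(q,q^2-q)$ this size is $q^3-q^2+1$); equivalently, a set of points meeting every line in exactly one point. *)

theory Defs
  imports Main
begin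

definition generalized_quadrangle ::
  "'p set \<Rightarrow> 'l set \<Rightarrow> ('p \<Rightarrow> 'l \<Rightarrow> bool) \<Rightarrow> nat \<Rightarrow> nat \<Rightarrow> bool" where
  "generalized_quadrangle P L I s t \<longleftrightarrow>
     P \<noteq> {} \<and>
     (\<forall>p\<in>P. card {l\<in>L. I p l} = t + 1) \<and>
     (\<forall>l\<in>L. card {p\<in>P. I p l} = s + 1) \<and>
     (\<forall>p\<in>P. \<forall>p'\<in>P. \<forall>l\<in>L. \<forall>l'\<in>L.
         p \<noteq> p' \<and> I p l \<and> I p' l \<and> I p l' \<and> I p' l' \<longrightarrow> l = l') \<and>
     (\<forall>p\<in>P. \<forall>l\<in>L. \<not> I p l \<longrightarrow>
         (\<exists>!(p', l'). p' \<in> P \<and> l' \<in> L \<and> I p' l \<and> I p l' \<and> I p' l'))"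

definition gq_automorphism ::
  "'p set \<Rightarrow> 'l set \<Rightarrow> ('p \<Rightarrow> 'l \<Rightarrow> bool) \<Rightarrow> ('p \<Rightarrow> 'p) \<Rightarrow> ('l \<Rightarrow> 'l) \<Rightarrow> bool" where
  "gq_automorphism P L I f g \<longleftrightarrow>
     bij_betw f P P \<and> bij_betw g L L \<and>
     (\<forall>p\<in>P. \<forall>l\<in>L. I (f p) (g l) \<longleftrightarrow> I p l)"

definition point_transitive ::
  "'p set \<Rightarrow> 'l set \<Rightarrow> ('p \<Rightarrow> 'l \<Rightarrow> bool) \<Rightarrow> bool" where
  "point_transitive P L I \<longleftrightarrow>
     (\<forall>x\<in>P. \<forall>y\<in>P. \<exists>f g. gq_automorphism P L I f g \<and> f x = y)"

definition ovoid :: "'p set \<Rightarrow> 'l set \<Rightarrow> ('p \<Rightarrow> 'l \<Rightarrow> bool) \<Rightarrow> 'p set \<Rightarrow> bool" where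
  "ovoid P L I Ov \<longleftrightarrow> Ov \<subseteq> P \<and> (\<forall>l\<in>L. \<exists>!p. p \<in> Ov \<and> I p l)"

end

theory Submission
  imports Defs
begin

lemma double_count:
  assumes "finite A" "finite B"
  shows "(\<Sum>a\<in>A. card {b\<in>B. R a b}) = (\<Sum>b\<in>B. card {a\<in>A. R a b})"
proof -
  have "(\<Sum>a\<in>A. card {b\<in>B. R a b}) = (\<Sum>a\<in>A. \<Sum>b\<in>B. if R a b then 1 else 0)"
    using assms by (simp add: sum.inter_filter[symmetric])
  also have "\<dots> = (\<Sum>b\<in>B. \<Sum>a\<in>A. if R a b then 1 else 0)" by (rule sum.swap)
  also have "\<dots> = (\<Sum>b\<in>B. card {a\<in>A. R a b})"
    using assms by (simp add: sum.inter_filter[symmetric])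
  finally show ?thesis .
qed

lemma my_ex1_eq: "\<exists>!x. Q x \<Longrightarrow> Q a \<Longrightarrow> Q b \<Longrightarrow> a = b" by blast

locale gq =
  fixes P :: "'p set" and L :: "'l set" and I :: "'p \<Rightarrow> 'l \<Rightarrow> bool" and s t :: nat
  assumes gq: "generalized_quadrangle P L I s t"
begin

definition col :: "'p \<Rightarrow> 'p \<Rightarrow> bool" where
  "col x y \<longleftrightarrow> (\<exists>l\<in>L. I x l \<and> I y l)"

definition lines :: "'p \<Rightarrow> 'l set" where "lines x = {l\<in>L. I x l}"
definition pts :: "'l \<Rightarrow> 'p set" where "pts l = {p\<in>P. I p l}"
definition perp :: "'p \<Rightarrow> 'p set" where "perp x = {y\<in>P. col x y}"
definition common :: "'p \<Rightarrow> 'p \<Rightarrow> 'p set" where "common x y = {w\<in>P. col x w \<and> col y w}"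

lemma gqD: "P \<noteq> {}" "\<And>p. p\<in>P \<Longrightarrow> card {l\<in>L. I p l} = t + 1"
  "\<And>l. l\<in>L \<Longrightarrow> card {p\<in>P. I p l} = s + 1"
  "\<And>p p' l l'. p\<in>P \<Longrightarrow> p'\<in>P \<Longrightarrow> l\<in>L \<Longrightarrow> l'\<in>L \<Longrightarrow>
         p \<noteq> p' \<Longrightarrow> I p l \<Longrightarrow> I p' l \<Longrightarrow> I p l' \<Longrightarrow> I p' l' \<Longrightarrow> l = l'"
  "\<And>p l. p\<in>P \<Longrightarrow> l\<in>L \<Longrightarrow> \<not> I p l \<Longrightarrow>
         (\<exists>!(p', l'). p' \<in> P \<and> l' \<in> L \<and> I p' l \<and> I p l' \<and> I p' l')"
  using gq unfolding generalized_quadrangle_def by blast+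

lemma P_ne: "P \<noteq> {}" by (rule gqD(1))

lemma card_lines: "x \<in> P \<Longrightarrow> card (lines x) = t + 1"
  unfolding lines_def by (rule gqD(2))

lemma finite_lines: "x \<in> P \<Longrightarrow> finite (lines x)"
  by (rule card_ge_0_finite) (simp add: card_lines)

lemma lines_ne: "x \<in> P \<Longrightarrow> lines x \<noteq> {}"
  using card_lines[of x] by auto

lemma card_pts: "l \<in> L \<Longrightarrow> card (pts l) = s + 1"
  unfolding pts_def by (rule gqD(3))

lemma finite_pts: "l \<in> L \<Longrightarrow> finite (pts l)"
  by (rule card_ge_0_finite) (simp add: card_pts)

lemma uline: "x \<in> P \<Longrightarrow> y \<in> P \<Longrightarrow> x \<noteq> y \<Longrightarrow> l \<in> L \<Longrightarrow> l' \<in> L \<Longrightarrow>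
   I x l \<Longrightarrow> I y l \<Longrightarrow> I x l' \<Longrightarrow> I y l' \<Longrightarrow> l = l'"
  using gqD(4)[of x y l l'] by blast

lemma col_sym: "col x y \<Longrightarrow> col y x" unfolding col_def by blast

lemma col_refl: "x \<in> P \<Longrightarrow> col x x"
  using lines_ne unfolding col_def lines_def by blast

lemma proj_ex: assumes "y \<in> P" "l \<in> L" "\<not> I y l"
  shows "\<exists>p. p \<in> P \<and> I p l \<and> col y p"
proof -
  from gqD(5) assms have "\<exists>!(p', l'). p' \<in> P \<and> l' \<in> L \<and> I p' l \<and> I y l' \<and> I p' l'"
    by blast
  then obtain p' l' where "p' \<in> P \<and> l' \<in> L \<and> I p' l \<and> I y l' \<and> I p' l'" by auto
  thus ?thesis unfolding col_def by blast
qed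

lemma proj_uniq: assumes "y \<in> P" "l \<in> L" "\<not> I y l"
  and "p1 \<in> P" "I p1 l" "col y p1" "p2 \<in> P" "I p2 l" "col y p2"
  shows "p1 = p2"
proof -
  from gqD(5) assms(1-3) have U: "\<exists>!(p', l'). p' \<in> P \<and> l' \<in> L \<and> I p' l \<and> I y l' \<and> I p' l'"
    by blast
  from assms obtain l1 l2 where "l1 \<in> L" "I y l1" "I p1 l1" "l2 \<in> L" "I y l2" "I p2 l2"
    unfolding col_def by blast
  let ?Q = "\<lambda>(p', l'). p' \<in> P \<and> l' \<in> L \<and> I p' l \<and> I y l' \<and> I p' l'"
  have q1: "?Q (p1, l1)" using assms \<open>l1 \<in> L\<close> \<open>I y l1\<close> \<open>I p1 l1\<close> by simp
  have q2: "?Q (p2, l2)" using assms \<open>l2 \<in> L\<close> \<open>I y l2\<close> \<open>I p2 l2\<close> by simp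
  have "(p1, l1) = (p2, l2)" using my_ex1_eq[OF U q1 q2] .
  thus ?thesis by simp
qed

definition proj :: "'p \<Rightarrow> 'l \<Rightarrow> 'p" where
  "proj y l = (THE p. p \<in> P \<and> I p l \<and> col y p)"

lemma proj: assumes "y \<in> P" "l \<in> L" "\<not> I y l"
  shows "proj y l \<in> P \<and> I (proj y l) l \<and> col y (proj y l)"
proof -
  have "\<exists>!p. p \<in> P \<and> I p l \<and> col y p"
    using proj_ex[OF assms] proj_uniq[OF assms] by blast
  thus ?thesis unfolding proj_def by (rule theI')
qed

lemma proj_eq: assumes "y \<in> P" "l \<in> L" "\<not> I y l" "p \<in> P" "I p l" "col y p"
  shows "proj y l = p"
  using proj[OF assms(1-3)] proj_uniq[OF assms(1-3)] assms(4-6) by blast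

lemma on_line: assumes "a \<in> P" "x \<in> P" "a \<noteq> x" "l \<in> L" "I a l" "I x l" "y \<in> P"
  "col a y" "col x y" "y \<noteq> a"
  shows "I y l"
proof -
  from assms(8) obtain m where m: "m \<in> L" "I a m" "I y m" unfolding col_def by blast
  show ?thesis
  proof (cases "I x m")
    case True
    have "m = l" by (fact uline[OF assms(1,2,3) m(1) assms(4) m(2) True assms(5,6)])
    then show ?thesis using m by simp
  next
    case False
    have "col x a" using assms(4,5,6) unfolding col_def by blast
    have "a = y" using proj_uniq[OF assms(2) m(1) False assms(1) m(2) \<open>col x a\<close> assms(7) m(3) assms(9)] .
    then show ?thesis using assms(10) by simp
  qed
qed

lemma common_card: assumes "x \<in> P" "z \<in> P" "\<not> col x z"
  shows "card (common x z) = t + 1"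
proof -
  have nI: "\<not> I x m" if "m \<in> lines z" for m
    using that assms(3) unfolding lines_def col_def by blast
  have pr: "proj x m \<in> P \<and> I (proj x m) m \<and> col x (proj x m)" if "m \<in> lines z" for m
    using proj[OF assms(1) _ nI[OF that]] that unfolding lines_def by blast
  have inj: "inj_on (proj x) (lines z)"
  proof (rule inj_onI)
    fix m1 m2 assume h: "m1 \<in> lines z" "m2 \<in> lines z" "proj x m1 = proj x m2"
    let ?p = "proj x m1"
    have "?p \<noteq> z" using pr[OF h(1)] assms(3) by auto
    then show "m1 = m2"
      using uline[of ?p z m1 m2] pr[OF h(1)] pr[OF h(2)] h assms(2) unfolding lines_def by auto
  qed
  have img: "proj x ` lines z = common x z"
  proof
    show "proj x ` lines z \<subseteq> common x z"
    proof
      fix p assume "p \<in> proj x ` lines z"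
      then obtain m where m: "m \<in> lines z" "p = proj x m" by blast
      then show "p \<in> common x z" using pr[OF m(1)] unfolding common_def col_def lines_def by blast
    qed
  next
    show "common x z \<subseteq> proj x ` lines z"
    proof
      fix w assume w: "w \<in> common x z"
      then obtain m where m: "m \<in> L" "I z m" "I w m" unfolding common_def col_def by blast
      then have ml: "m \<in> lines z" unfolding lines_def by blast
      have "proj x m = w" using proj_eq[OF assms(1) m(1) nI[OF ml]] w m unfolding common_def by blast
      then show "w \<in> proj x ` lines z" using ml by blast
    qed
  qed
  have "card (common x z) = card (lines z)" using card_image[OF inj] img by simp
  then show ?thesis using card_lines[OF assms(2)] by simp
qed

lemma perp_eq: assumes "x \<in> P"
  shows "perp x - {x} = (\<Union>l\<in>lines x. pts l - {x})"
  unfolding perp_def lines_def pts_def col_def by blast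

lemma card_perp: assumes "x \<in> P"
  shows "finite (perp x)" "card (perp x) = 1 + s * (t + 1)"
proof -
  have fin: "\<forall>l\<in>lines x. finite (pts l - {x})"
    using finite_pts unfolding lines_def by blast
  have disj: "\<forall>l1\<in>lines x. \<forall>l2\<in>lines x. l1 \<noteq> l2 \<longrightarrow> (pts l1 - {x}) \<inter> (pts l2 - {x}) = {}"
    using uline assms unfolding lines_def pts_def by blast
  have c: "card (pts l - {x}) = s" if "l \<in> lines x" for l
    using card_pts that assms unfolding lines_def pts_def by (simp add: card_Diff_singleton_if)
  have f1: "finite (perp x - {x})" unfolding perp_eq[OF assms]
    using finite_lines[OF assms] fin by blast
  have "card (perp x - {x}) = (\<Sum>l\<in>lines x. card (pts l - {x}))"
    unfolding perp_eq[OF assms] using card_UN_disjoint[OF finite_lines[OF assms] fin disj] by blast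
  also have "\<dots> = (t + 1) * s" using c card_lines[OF assms] by simp
  finally have c1: "card (perp x - {x}) = (t+1) * s" .
  have xin: "x \<in> perp x" using col_refl assms unfolding perp_def by blast
  show "finite (perp x)" using f1 by simp
  show "card (perp x) = 1 + s * (t + 1)"
    using c1 xin f1 by (simp add: card_Diff_singleton_if) (metis Suc_pred card_gt_0_iff empty_iff finite_Diff2 finite.emptyI finite_insert mult.commute)
qed

lemma finite_P: "finite P"
proof -
  obtain x where x: "x \<in> P" using P_ne by blast
  have "P \<subseteq> (\<Union>w\<in>perp x. perp w)"
  proof
    fix y assume y: "y \<in> P"
    show "y \<in> (\<Union>w\<in>perp x. perp w)"
    proof (cases "col x y")
      case True
      then have "y \<in> perp x" "y \<in> perp y" using y col_refl unfolding perp_def by auto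
      then show ?thesis by blast
    next
      case False
      obtain l where l: "l \<in> lines x" using lines_ne[OF x] by blast
      have nI: "\<not> I y l" using False l unfolding lines_def col_def by blast
      have lL: "l \<in> L" "I x l" using l unfolding lines_def by auto
      let ?p = "proj y l"
      have p: "?p \<in> P \<and> I ?p l \<and> col y ?p" using proj[OF y lL(1) nI] .
      have "?p \<in> perp x" using p lL unfolding perp_def col_def by blast
      moreover have "y \<in> perp ?p" using p y col_sym unfolding perp_def by blast
      ultimately show ?thesis by blast
    qed
  qed
  moreover have "finite (\<Union>w\<in>perp x. perp w)"
    using card_perp(1) x unfolding perp_def by auto
  ultimately show ?thesis by (rule finite_subset)
qed

lemma noncol_card: assumes "x \<in> P" "w \<in> P" "w \<noteq> x" "col x w"
  shows "card {y\<in>P. \<not> col x y \<and> col y w} = s * t"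
proof -
  let ?M = "{m\<in>lines w. \<not> I x m}"
  have eq: "{y\<in>P. \<not> col x y \<and> col y w} = (\<Union>m\<in>?M. pts m - {w})"
  proof
    show "{y\<in>P. \<not> col x y \<and> col y w} \<subseteq> (\<Union>m\<in>?M. pts m - {w})"
    proof
      fix y assume y: "y \<in> {y\<in>P. \<not> col x y \<and> col y w}"
      then obtain m where m: "m \<in> L" "I y m" "I w m" unfolding col_def by blast
      have "\<not> I x m" using y m unfolding col_def by blast
      moreover have "y \<noteq> w" using y assms(4) by blast
      ultimately show "y \<in> (\<Union>m\<in>?M. pts m - {w})" using m y unfolding lines_def pts_def by blast
    qed
  next
    show "(\<Union>m\<in>?M. pts m - {w}) \<subseteq> {y\<in>P. \<not> col x y \<and> col y w}"
    proof
      fix y assume "y \<in> (\<Union>m\<in>?M. pts m - {w})"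
      then obtain m where m: "m \<in> L" "I w m" "\<not> I x m" "y \<in> P" "I y m" "y \<noteq> w"
        unfolding lines_def pts_def by blast
      have "\<not> col x y"
      proof
        assume "col x y"
        then have "w = y" using proj_uniq[OF assms(1) m(1) m(3) assms(2) m(2) assms(4) m(4) m(5)] by blast
        then show False using m(6) by simp
      qed
      then show "y \<in> {y\<in>P. \<not> col x y \<and> col y w}" using m unfolding col_def by blast
    qed
  qed
  obtain l0 where l0: "l0 \<in> L" "I x l0" "I w l0" using assms(4) unfolding col_def by blast
  have Meq: "?M = lines w - {l0}"
    using l0 uline[OF assms(1,2) assms(3)[symmetric]] unfolding lines_def by blast
  have cM: "card ?M = t" using Meq card_lines[OF assms(2)] l0 unfolding lines_def
    by (simp add: card_Diff_singleton_if finite_lines[OF assms(2), unfolded lines_def])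
  have finM: "finite ?M" using finite_lines[OF assms(2)] by simp
  have fin: "\<forall>m\<in>?M. finite (pts m - {w})"
    using finite_pts unfolding lines_def by blast
  have disj: "\<forall>m1\<in>?M. \<forall>m2\<in>?M. m1 \<noteq> m2 \<longrightarrow> (pts m1 - {w}) \<inter> (pts m2 - {w}) = {}"
    using uline assms(2) unfolding lines_def pts_def by blast
  have c: "card (pts m - {w}) = s" if "m \<in> ?M" for m
    using card_pts that assms unfolding lines_def pts_def by (simp add: card_Diff_singleton_if)
  have "card {y\<in>P. \<not> col x y \<and> col y w} = (\<Sum>m\<in>?M. card (pts m - {w}))"
    unfolding eq by (rule card_UN_disjoint[OF finM fin disj])
  also have "\<dots> = t * s" using c cM by simp
  finally show ?thesis by simp
qed

lemma common_eq: "x \<in> P \<Longrightarrow> \<not> col x y \<Longrightarrow> {w\<in>perp x - {x}. col y w} = common x y"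
  unfolding common_def perp_def using col_sym by blast

lemma card_noncol: assumes "x \<in> P"
  shows "card (P - perp x) = s * s * t"
proof -
  let ?A = "P - perp x" and ?B = "perp x - {x}"
  have fA: "finite ?A" using finite_P by simp
  have fB: "finite ?B" using card_perp(1)[OF assms] by simp
  have "(\<Sum>y\<in>?A. card {w\<in>?B. col y w}) = (\<Sum>w\<in>?B. card {y\<in>?A. col y w})"
    by (rule double_count[OF fA fB])
  moreover have "(\<Sum>y\<in>?A. card {w\<in>?B. col y w}) = (\<Sum>y\<in>?A. t + 1)"
  proof (rule sum.cong)
    fix y assume y: "y \<in> ?A"
    then have "\<not> col x y" "y \<in> P" unfolding perp_def by auto
    then show "card {w\<in>?B. col y w} = t + 1"
      using common_eq[OF assms] common_card[OF assms] by simp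
  qed simp
  moreover have "(\<Sum>w\<in>?B. card {y\<in>?A. col y w}) = (\<Sum>w\<in>?B. s * t)"
  proof (rule sum.cong)
    fix w assume w: "w \<in> ?B"
    then have "w \<in> P" "w \<noteq> x" "col x w" unfolding perp_def by auto
    moreover have "{y\<in>?A. col y w} = {y\<in>P. \<not> col x y \<and> col y w}" unfolding perp_def by blast
    ultimately show "card {y\<in>?A. col y w} = s * t" using noncol_card[OF assms] by simp
  qed simp
  moreover have "card ?B = s * (t + 1)"
    using card_perp[OF assms] col_refl[OF assms] assms unfolding perp_def
    by (simp add: card_Diff_singleton_if)
  ultimately have "card ?A * (t + 1) = s * (t + 1) * (s * t)" by simp
  then have "card ?A * (t + 1) = (s * s * t) * (t + 1)" by (simp add: algebra_simps)
  then show ?thesis by (metis mult_right_cancel add_is_0 one_neq_zero)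
qed

lemma card_P: "card P = (s + 1) * (s * t + 1)"
proof -
  obtain x where x: "x \<in> P" using P_ne by blast
  have sub: "perp x \<subseteq> P" unfolding perp_def by blast
  have "card P = card (perp x) + card (P - perp x)"
    using card_Diff_subset[OF card_perp(1)[OF x] sub] card_mono[OF finite_P sub] by simp
  also have "\<dots> = 1 + s * (t + 1) + s * s * t" using card_perp(2)[OF x] card_noncol[OF x] by simp
  finally show ?thesis by (simp add: algebra_simps)
qed

lemma ov_sub: "ovoid P L I W \<Longrightarrow> W \<subseteq> P" unfolding ovoid_def by blast

lemma ov_line: "ovoid P L I W \<Longrightarrow> l \<in> L \<Longrightarrow> \<exists>!p. p \<in> W \<and> I p l"
  unfolding ovoid_def by blast

lemma ov_noncol: assumes "ovoid P L I W" "a \<in> W" "b \<in> W" "col a b" shows "a = b"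
proof -
  from assms(4) obtain l where "l \<in> L" "I a l" "I b l" unfolding col_def by blast
  then have "\<exists>!p. p \<in> W \<and> I p l" using ov_line[OF assms(1)] by blast
  then show ?thesis using my_ex1_eq[of "\<lambda>p. p \<in> W \<and> I p l" a b] assms(2,3) \<open>I a l\<close> \<open>I b l\<close> by blast
qed

lemma ov_pt_card: assumes "ovoid P L I W" "w \<in> P" "w \<notin> W"
  shows "card {z\<in>W. col w z} = t + 1"
proof -
  define psi where "psi m = (THE z. z \<in> W \<and> I z m)" for m
  have ps: "psi m \<in> W \<and> I (psi m) m" if "m \<in> lines w" for m
  proof -
    have "m \<in> L" using that unfolding lines_def by blast
    then show ?thesis unfolding psi_def by (rule theI'[OF ov_line[OF assms(1)]])
  qed
  have pseq: "psi m = z" if "m \<in> lines w" "z \<in> W" "I z m" for m z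
  proof -
    have "m \<in> L" using that unfolding lines_def by blast
    then show ?thesis unfolding psi_def using the1_equality[OF ov_line[OF assms(1)]] that(2,3) by blast
  qed
  have WP_: "W \<subseteq> P" by (rule ov_sub[OF assms(1)])
  have inj: "inj_on psi (lines w)"
  proof (rule inj_onI)
    fix m1 m2 assume h: "m1 \<in> lines w" "m2 \<in> lines w" "psi m1 = psi m2"
    have "psi m1 \<noteq> w" using ps[OF h(1)] assms(3) by auto
    then show "m1 = m2"
      using uline[of "psi m1" w m1 m2] ps[OF h(1)] ps[OF h(2)] h assms(2) WP_ unfolding lines_def by auto
  qed
  have img: "psi ` lines w = {z\<in>W. col w z}"
  proof
    show "psi ` lines w \<subseteq> {z\<in>W. col w z}"
      using ps unfolding lines_def col_def by blast
  next
    show "{z\<in>W. col w z} \<subseteq> psi ` lines w"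
    proof
      fix z assume z: "z \<in> {z\<in>W. col w z}"
      then obtain m where m: "m \<in> L" "I w m" "I z m" unfolding col_def by blast
      then have ml: "m \<in> lines w" unfolding lines_def by blast
      have "psi m = z" using pseq[OF ml _ m(3)] z by blast
      then show "z \<in> psi ` lines w" using ml by blast
    qed
  qed
  show ?thesis using card_image[OF inj] img card_lines[OF assms(2)] by simp
qed

lemma L_ne: "L \<noteq> {}"
proof -
  obtain x where "x \<in> P" using P_ne by blast
  then obtain l where "l \<in> lines x" using lines_ne by blast
  then show ?thesis unfolding lines_def by blast
qed

lemma ov_ne: "ovoid P L I W \<Longrightarrow> W \<noteq> {}"
proof -
  assume ov: "ovoid P L I W"
  obtain l where "l \<in> L" using L_ne by blast
  then obtain p where "p \<in> W" using ex1_implies_ex[OF ov_line[OF ov]] by blast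
  then show "W \<noteq> {}" by blast
qed

lemma ov_finite: "ovoid P L I W \<Longrightarrow> finite W"
  using ov_sub finite_P finite_subset by blast

lemma ov_card: assumes ov: "ovoid P L I W" shows "card W = s * t + 1"
proof -
  obtain a where a: "a \<in> W" using ov_ne[OF ov] by blast
  have WP_: "W \<subseteq> P" by (rule ov_sub[OF ov])
  have aP: "a \<in> P" using a WP_ by blast
  let ?A = "W - {a}" and ?B = "perp a - {a}"
  have fA: "finite ?A" using ov_finite[OF ov] by simp
  have fB: "finite ?B" using card_perp(1)[OF aP] by simp
  have "(\<Sum>y\<in>?A. card {w\<in>?B. col y w}) = (\<Sum>w\<in>?B. card {y\<in>?A. col y w})"
    by (rule double_count[OF fA fB])
  moreover have "(\<Sum>y\<in>?A. card {w\<in>?B. col y w}) = (\<Sum>y\<in>?A. t + 1)"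
  proof (rule sum.cong)
    fix y assume y: "y \<in> ?A"
    then have "y \<in> W" "y \<noteq> a" by auto
    then have "\<not> col a y" "y \<in> P" using ov_noncol[OF ov a \<open>y \<in> W\<close>] WP_ by auto
    then show "card {w\<in>?B. col y w} = t + 1"
      using common_eq[OF aP] common_card[OF aP] by simp
  qed simp
  moreover have "(\<Sum>w\<in>?B. card {y\<in>?A. col y w}) = (\<Sum>w\<in>?B. t)"
  proof (rule sum.cong)
    fix w assume w: "w \<in> ?B"
    then have wP: "w \<in> P" and wa: "w \<noteq> a" "col a w" unfolding perp_def by auto
    have wO: "w \<notin> W" using ov_noncol[OF ov a _ wa(2)] wa(1) by blast
    have "{y\<in>?A. col y w} = {z\<in>W. col w z} - {a}" using col_sym by auto
    moreover have "a \<in> {z\<in>W. col w z}" using a wa col_sym by blast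
    ultimately show "card {y\<in>?A. col y w} = t"
      using ov_pt_card[OF ov wP wO] ov_finite[OF ov] by (simp add: card_Diff_singleton_if)
  qed simp
  moreover have "card ?B = s * (t + 1)"
    using card_perp[OF aP] col_refl[OF aP] aP unfolding perp_def
    by (simp add: card_Diff_singleton_if)
  ultimately have "card ?A * (t + 1) = s * (t + 1) * t" by simp
  then have "card ?A * (t + 1) = (s * t) * (t + 1)" by (simp add: algebra_simps)
  then have "card ?A = s * t" by (metis mult_right_cancel add_is_0 one_neq_zero)
  moreover have "card W = card ?A + 1" using card.remove[OF ov_finite[OF ov] a] by simp
  ultimately show ?thesis by simp
qed

definition offd :: "'a set \<Rightarrow> ('a \<times> 'a) set" where
  "offd S = {p. fst p \<in> S \<and> snd p \<in> S \<and> fst p \<noteq> snd p}"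

lemma card_offd: assumes "finite S" shows "card (offd S) = card S * card S - card S"
proof -
  have eq: "offd S = S \<times> S - (\<lambda>a. (a, a)) ` S" unfolding offd_def by auto
  have sub: "(\<lambda>a. (a, a)) ` S \<subseteq> S \<times> S" by auto
  have ci: "card ((\<lambda>a. (a, a)) ` S) = card S" by (rule card_image) (auto intro: inj_onI)
  show ?thesis unfolding eq using card_Diff_subset[OF finite_imageI[OF assms] sub] ci
    by (simp add: card_cartesian_product)
qed

lemma finite_offd: "finite S \<Longrightarrow> finite (offd S)"
  unfolding offd_def by (rule finite_subset[of _ "S \<times> S"]) auto

lemma key: assumes ov: "ovoid P L I W" and ts: "t + s = s * s"
  and x: "x \<in> P" "x \<notin> W"
  shows "\<forall>y\<in>{y\<in>P. y \<notin> W \<and> \<not> col x y}. card {a\<in>{a\<in>W. col x a}. col y a} = s"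
proof -
  define T where "T = {a\<in>W. col x a}"
  define Y where "Y = {y\<in>P. y \<notin> W \<and> \<not> col x y}"
  define m where "m y = card {a\<in>T. col y a}" for y
  have WP_: "W \<subseteq> P" by (rule ov_sub[OF ov])
  have fW: "finite W" by (rule ov_finite[OF ov])
  have fT: "finite T" unfolding T_def using fW by simp
  have fY: "finite Y" unfolding Y_def using finite_P by simp
  have cT: "card T = t + 1" unfolding T_def by (rule ov_pt_card[OF ov x])
  have TW: "T \<subseteq> W" unfolding T_def by blast
  have xT: "a \<noteq> x" "col x a" "a \<in> W" "a \<in> P" if "a \<in> T" for a
    using that x WP_ unfolding T_def by auto
  have cY: "int (card Y) = int s * int s * int t - int s * int t + int t"
  proof -
    have Yeq: "Y = P - (perp x \<union> W)" unfolding Y_def perp_def by auto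
    have sub: "perp x \<union> W \<subseteq> P" using WP_ unfolding perp_def by auto
    have fU: "finite (perp x \<union> W)" using card_perp(1)[OF x(1)] fW by simp
    have c1: "card P = card Y + card (perp x \<union> W)"
      unfolding Yeq using card_Diff_subset[OF fU sub] card_mono[OF finite_P sub] by simp
    have c2: "card (perp x \<union> W) + card (perp x \<inter> W) = card (perp x) + card W"
      using card_Un_Int[OF card_perp(1)[OF x(1)] fW] by simp
    have "perp x \<inter> W = T" unfolding perp_def T_def using WP_ by auto
    then have "card Y + (1 + s * (t + 1)) + (s * t + 1) = (s + 1) * (s * t + 1) + (t + 1)"
      using c1 c2 card_P card_perp(2)[OF x(1)] ov_card[OF ov] cT by simp
    then have "int (card Y) + (1 + int s * (int t + 1)) + (int s * int t + 1) = (int s + 1) * (int s * int t + 1) + (int t + 1)"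
      by (metis (mono_tags, lifting) of_nat_add of_nat_mult of_nat_1)
    then show ?thesis by (simp add: algebra_simps)
  qed
  have S1: "(\<Sum>y\<in>Y. m y) = (t + 1) * (s * t)"
  proof -
    have "(\<Sum>y\<in>Y. card {a\<in>T. col y a}) = (\<Sum>a\<in>T. card {y\<in>Y. col y a})"
      by (rule double_count[OF fY fT])
    also have "\<dots> = (\<Sum>a\<in>T. s * t)"
    proof (rule sum.cong)
      fix a assume a: "a \<in> T"
      have "{y\<in>Y. col y a} = {y\<in>P. \<not> col x y \<and> col y a}"
      proof
        show "{y\<in>Y. col y a} \<subseteq> {y\<in>P. \<not> col x y \<and> col y a}" unfolding Y_def by blast
        show "{y\<in>P. \<not> col x y \<and> col y a} \<subseteq> {y\<in>Y. col y a}"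
        proof
          fix y assume y: "y \<in> {y\<in>P. \<not> col x y \<and> col y a}"
          have "y \<notin> W"
          proof
            assume "y \<in> W"
            then have "a = y" using ov_noncol[OF ov xT(3)[OF a] _ col_sym] y by blast
            then show False using y xT(2)[OF a] by blast
          qed
          then show "y \<in> {y\<in>Y. col y a}" using y unfolding Y_def by blast
        qed
      qed
      then show "card {y\<in>Y. col y a} = s * t"
        using noncol_card[OF x(1) xT(4)[OF a] xT(1)[OF a] xT(2)[OF a]] by simp
    qed simp
    finally show ?thesis unfolding m_def using cT by simp
  qed
  have S2: "(\<Sum>y\<in>Y. card (offd {a\<in>T. col y a})) = ((t + 1) * t) * t"
  proof -
    have e: "offd {a\<in>T. col y a} = {p\<in>offd T. col y (fst p) \<and> col y (snd p)}" for y
      unfolding offd_def by auto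
    have "(\<Sum>y\<in>Y. card {p\<in>offd T. col y (fst p) \<and> col y (snd p)})
        = (\<Sum>p\<in>offd T. card {y\<in>Y. col y (fst p) \<and> col y (snd p)})"
      by (rule double_count[OF fY finite_offd[OF fT]])
    also have "\<dots> = (\<Sum>p\<in>offd T. t)"
    proof (rule sum.cong)
      fix p assume p: "p \<in> offd T"
      obtain a b where ab: "p = (a, b)" by fastforce
      have a: "a \<in> T" and b: "b \<in> T" and ab_ne: "a \<noteq> b" using p ab unfolding offd_def by auto
      have nab: "\<not> col a b" using ov_noncol[OF ov xT(3)[OF a] xT(3)[OF b]] ab_ne by blast
      have xc: "x \<in> common a b" using x(1) xT(2)[OF a] xT(2)[OF b] col_sym unfolding common_def by blast
      have "{y\<in>Y. col y a \<and> col y b} = common a b - {x}"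
      proof
        show "{y\<in>Y. col y a \<and> col y b} \<subseteq> common a b - {x}"
          unfolding Y_def common_def using col_sym col_refl by blast
      next
        show "common a b - {x} \<subseteq> {y\<in>Y. col y a \<and> col y b}"
        proof
          fix w assume w: "w \<in> common a b - {x}"
          have wP: "w \<in> P" and caw: "col a w" and cbw: "col b w" and wx: "w \<noteq> x"
            using w unfolding common_def by auto
          have wW: "w \<notin> W"
          proof
            assume "w \<in> W"
            then have "a = w" using ov_noncol[OF ov xT(3)[OF a] _ caw] by blast
            then show False using cbw nab col_sym by blast
          qed
          have wa: "w \<noteq> a" using wW xT(3)[OF a] by blast
          have wb: "w \<noteq> b" using wW xT(3)[OF b] by blast
          have "\<not> col x w"
          proof
            assume cxw: "col x w"
            obtain l where l: "l \<in> L" "I x l" "I a l" using xT(2)[OF a] unfolding col_def by blast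
            obtain l' where l': "l' \<in> L" "I x l'" "I b l'" using xT(2)[OF b] unfolding col_def by blast
            have wl: "I w l" by (rule on_line[OF xT(4)[OF a] x(1) xT(1)[OF a] l(1) l(3) l(2) wP caw cxw wa])
            have wl': "I w l'" by (rule on_line[OF xT(4)[OF b] x(1) xT(1)[OF b] l'(1) l'(3) l'(2) wP cbw cxw wb])
            have "l = l'" by (rule uline[OF wP x(1) wx l(1) l'(1) wl l(2) wl' l'(2)])
            then have "col a b" using l l' unfolding col_def by blast
            then show False using nab by blast
          qed
          then show "w \<in> {y\<in>Y. col y a \<and> col y b}"
            using wP wW caw cbw col_sym unfolding Y_def by blast
        qed
      qed
      moreover have "card (common a b) = t + 1"
        by (rule common_card[OF xT(4)[OF a] xT(4)[OF b] nab])
      moreover have "finite (common a b)" using finite_P unfolding common_def by simp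
      ultimately show "card {y\<in>Y. col y (fst p) \<and> col y (snd p)} = t"
        using ab xc by (simp add: card_Diff_singleton_if)
    qed simp
    also have "\<dots> = card (offd T) * t" by simp
    also have "card (offd T) = (t + 1) * t" using card_offd[OF fT] cT by (simp add: algebra_simps)
    finally show ?thesis unfolding e by simp
  qed
  have mm: "int (card (offd {a\<in>T. col y a})) = int (m y) * int (m y) - int (m y)" for y
  proof -
    have "finite {a\<in>T. col y a}" using fT by simp
    then have "card (offd {a\<in>T. col y a}) = m y * m y - m y" unfolding m_def by (rule card_offd)
    moreover have "m y \<le> m y * m y" by (cases "m y") auto
    ultimately show ?thesis by (simp add: of_nat_diff)
  qed
  have I1: "(\<Sum>y\<in>Y. int (m y)) = (int t + 1) * (int s * int t)"
  proof -
    have "(\<Sum>y\<in>Y. int (m y)) = int (\<Sum>y\<in>Y. m y)" by (simp add: of_nat_sum)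
    also have "\<dots> = (int t + 1) * (int s * int t)" unfolding S1 by (simp add: algebra_simps)
    finally show ?thesis .
  qed
  have I2: "(\<Sum>y\<in>Y. int (m y) * int (m y) - int (m y)) = (int t + 1) * int t * int t"
  proof -
    have "(\<Sum>y\<in>Y. int (card (offd {a\<in>T. col y a}))) = (int t + 1) * int t * int t"
    proof -
      have "(\<Sum>y\<in>Y. int (card (offd {a\<in>T. col y a}))) = int (\<Sum>y\<in>Y. card (offd {a\<in>T. col y a}))" by (simp add: of_nat_sum)
      also have "\<dots> = (int t + 1) * int t * int t" unfolding S2 by (simp add: algebra_simps)
      finally show ?thesis .
    qed
    then show ?thesis using mm by simp
  qed
  have tsi: "int t = int s * int s - int s" using ts by (metis add_diff_cancel_right' of_nat_add of_nat_mult)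
  have pw: "(int (m y) - int s)^2 = (int (m y) * int (m y) - int (m y)) + (1 - 2 * int s) * int (m y) + int s * int s" for y
    by (simp add: power2_eq_square algebra_simps)
  have "(\<Sum>y\<in>Y. (int (m y) - int s)^2) = (\<Sum>y\<in>Y. int (m y) * int (m y) - int (m y)) + (1 - 2 * int s) * (\<Sum>y\<in>Y. int (m y)) + int s * int s * int (card Y)"
    unfolding pw by (simp add: sum.distrib sum_distrib_left)
  also have "\<dots> = 0" unfolding I1 I2 cY tsi by (simp add: algebra_simps)
  finally have z: "(\<Sum>y\<in>Y. (int (m y) - int s)^2) = 0" .
  have "\<forall>y\<in>Y. (int (m y) - int s)^2 = 0"
    using sum_nonneg_eq_0_iff[OF fY, of "\<lambda>y. (int (m y) - int s)^2"] z by simp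
  then show ?thesis unfolding Y_def[symmetric] T_def[symmetric] m_def by simp
qed

lemma inter: assumes ov: "ovoid P L I M" and ov': "ovoid P L I M'" and ts: "t + s = s * s"
  and x: "x \<in> M'" "x \<notin> M"
  shows "card (M' - M - {x}) * s = (t + 1) * t"
proof -
  let ?A = "M' - M - {x}" and ?B = "{a\<in>M. col x a}"
  have MP: "M \<subseteq> P" "M' \<subseteq> P" using ov_sub ov ov' by auto
  have xP: "x \<in> P" using x MP by blast
  have fA: "finite ?A" using ov_finite[OF ov'] by simp
  have fB: "finite ?B" using ov_finite[OF ov] by simp
  have K: "\<forall>y\<in>{y\<in>P. y \<notin> M \<and> \<not> col x y}. card {a\<in>?B. col y a} = s"
    by (rule key[OF ov ts xP x(2)])
  have "(\<Sum>y\<in>?A. card {a\<in>?B. col y a}) = (\<Sum>a\<in>?B. card {y\<in>?A. col y a})"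
    by (rule double_count[OF fA fB])
  moreover have "(\<Sum>y\<in>?A. card {a\<in>?B. col y a}) = (\<Sum>y\<in>?A. s)"
  proof (rule sum.cong)
    fix y assume y: "y \<in> ?A"
    have "\<not> col x y"
    proof
      assume "col x y" then have "x = y" using ov_noncol[OF ov' x(1)] y by blast
      then show False using y by blast
    qed
    then have "y \<in> {y\<in>P. y \<notin> M \<and> \<not> col x y}" using y MP by blast
    then show "card {a\<in>?B. col y a} = s" using K by blast
  qed simp
  moreover have "(\<Sum>a\<in>?B. card {y\<in>?A. col y a}) = (\<Sum>a\<in>?B. t)"
  proof (rule sum.cong)
    fix a assume a: "a \<in> ?B"
    have aP: "a \<in> P" using a MP by blast
    have aM': "a \<notin> M'"
    proof
      assume "a \<in> M'" then have "x = a" using ov_noncol[OF ov' x(1)] a by blast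
      then show False using a x(2) by blast
    qed
    have eq: "{y\<in>?A. col y a} = {y\<in>M'. col a y} - {x}"
    proof
      show "{y\<in>?A. col y a} \<subseteq> {y\<in>M'. col a y} - {x}" using col_sym by blast
      show "{y\<in>M'. col a y} - {x} \<subseteq> {y\<in>?A. col y a}"
      proof
        fix y assume y: "y \<in> {y\<in>M'. col a y} - {x}"
        have "y \<notin> M"
        proof
          assume "y \<in> M"
          then have "a = y" using ov_noncol[OF ov _ _] a y by blast
          then show False using y aM' by blast
        qed
        then show "y \<in> {y\<in>?A. col y a}" using y col_sym by blast
      qed
    qed
    have xin: "x \<in> {y\<in>M'. col a y}" using a x(1) col_sym by blast
    show "card {y\<in>?A. col y a} = t"
      unfolding eq using ov_pt_card[OF ov' aP aM'] xin ov_finite[OF ov']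
      by (simp add: card_Diff_singleton_if)
  qed simp
  moreover have "card ?B = t + 1" by (rule ov_pt_card[OF ov xP x(2)])
  ultimately show ?thesis by (simp add: mult.commute)
qed

end

lemma aut_ovoid: assumes a: "gq_automorphism P L I f g" and ov: "ovoid P L I W"
  shows "ovoid P L I (f ` W)"
proof -
  have fP: "f ` P = P" and gL: "g ` L = L" and inc: "\<And>p l. p \<in> P \<Longrightarrow> l \<in> L \<Longrightarrow> I (f p) (g l) \<longleftrightarrow> I p l"
    using a unfolding gq_automorphism_def bij_betw_def by auto
  have WP: "W \<subseteq> P" using ov unfolding ovoid_def by blast
  have h1: "f ` W \<subseteq> P" using WP fP by blast
  have h2: "\<exists>!p. p \<in> f ` W \<and> I p l" if l: "l \<in> L" for l
  proof -
    obtain l0 where l0: "l0 \<in> L" "l = g l0" using l gL by blast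
    have "\<exists>!p. p \<in> W \<and> I p l0" using ov l0 unfolding ovoid_def by blast
    then obtain a where a: "a \<in> W" "I a l0" and u: "\<And>b. b \<in> W \<Longrightarrow> I b l0 \<Longrightarrow> b = a" by blast
    have e1: "f a \<in> f ` W \<and> I (f a) l" using a l0 inc WP by blast
    have e2: "p = f a" if hp: "p \<in> f ` W" "I p l" for p
    proof -
      obtain b where b: "b \<in> W" "p = f b" using hp(1) by blast
      have "I b l0" using hp(2) b l0 inc WP by blast
      then show ?thesis using u b by blast
    qed
    show ?thesis by (rule ex1I[of _ "f a"]) (use e1 e2 in auto)
  qed
  show ?thesis unfolding ovoid_def
  proof (intro conjI ballI)
    show "f ` W \<subseteq> P" by (fact h1)
  next
    fix l assume "l \<in> L" then show "\<exists>!p. p \<in> f ` W \<and> I p l" by (rule h2)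
  qed
qed

lemma aut_inj: assumes "gq_automorphism P L I f g" shows "inj_on f P"
  using assms unfolding gq_automorphism_def bij_betw_def by blast


context gq
begin

lemma r_le: assumes pt: "point_transitive P L I" and x: "x \<in> P" and y: "y \<in> P"
  shows "card {W. ovoid P L I W \<and> x \<in> W} \<le> card {W. ovoid P L I W \<and> y \<in> W}"
proof -
  obtain f g where fg: "gq_automorphism P L I f g" "f x = y"
    using pt x y unfolding point_transitive_def by blast
  have inj: "inj_on (\<lambda>W. f ` W) {W. ovoid P L I W \<and> x \<in> W}"
  proof (rule inj_onI)
    fix W1 W2 assume h: "W1 \<in> {W. ovoid P L I W \<and> x \<in> W}" "W2 \<in> {W. ovoid P L I W \<and> x \<in> W}"
      "f ` W1 = f ` W2"
    have "W1 \<subseteq> P" "W2 \<subseteq> P" using h ov_sub by auto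
    then show "W1 = W2" using inj_on_image_eq_iff[OF aut_inj[OF fg(1)]] h(3) by blast
  qed
  have sub: "(\<lambda>W. f ` W) ` {W. ovoid P L I W \<and> x \<in> W} \<subseteq> {W. ovoid P L I W \<and> y \<in> W}"
    using aut_ovoid[OF fg(1)] fg(2) by blast
  have fin: "finite {W. ovoid P L I W \<and> y \<in> W}"
    by (rule finite_subset[of _ "Pow P"]) (use ov_sub finite_P in auto)
  show ?thesis by (rule card_inj_on_le[OF inj sub fin])
qed

lemma main: assumes q: "q > 2" "s = q" "t = q^2 - q" and pt: "point_transitive P L I"
  and ov0: "ovoid P L I W0"
  shows False
proof -
  have qq: "q \<le> q^2" using q(1) by (simp add: power2_eq_square)
  have ts: "t + s = s * s" using q qq by (simp add: power2_eq_square)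
  define Ov where "Ov = {W. ovoid P L I W}"
  have fO: "finite Ov" unfolding Ov_def
    by (rule finite_subset[of _ "Pow P"]) (use ov_sub finite_P in auto)
  have W0O: "W0 \<in> Ov" unfolding Ov_def using ov0 by simp
  obtain x0 where x0W: "x0 \<in> W0" using ov_ne[OF ov0] by blast
  have x0: "x0 \<in> P" using x0W ov_sub[OF ov0] by blast
  define r where "r = card {W\<in>Ov. x0 \<in> W}"
  have rx: "card {W\<in>Ov. x \<in> W} = r" if "x \<in> P" for x
    unfolding r_def Ov_def using r_le[OF pt that x0] r_le[OF pt x0 that] by simp
  define n where "n = card Ov"
  define V where "V = s * t + 1"
  have cW: "card W = V" if "W \<in> Ov" for W using ov_card that unfolding Ov_def V_def by blast
  have E1: "n * V = card P * r"
  proof -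
    have "(\<Sum>W\<in>Ov. card {x\<in>P. x \<in> W}) = (\<Sum>x\<in>P. card {W\<in>Ov. x \<in> W})"
      by (rule double_count[OF fO finite_P])
    moreover have "(\<Sum>W\<in>Ov. card {x\<in>P. x \<in> W}) = (\<Sum>W\<in>Ov. V)"
    proof (rule sum.cong)
      fix W assume W: "W \<in> Ov"
      then have "{x\<in>P. x \<in> W} = W" using ov_sub unfolding Ov_def by blast
      then show "card {x\<in>P. x \<in> W} = V" using cW[OF W] by simp
    qed simp
    moreover have "(\<Sum>x\<in>P. card {W\<in>Ov. x \<in> W}) = (\<Sum>x\<in>P. r)" using rx by simp
    ultimately show ?thesis unfolding n_def by simp
  qed
  define Q where "Q = int q"
  have Q3: "Q > 2" using q(1) unfolding Q_def by simp
  have ti: "int t = Q * Q - Q" unfolding Q_def q(3) using qq by (simp add: of_nat_diff power2_eq_square)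
  have si: "int s = Q" unfolding Q_def q(2) by simp
  have Vi: "int V = Q * (Q * Q - Q) + 1" unfolding V_def using ti si by simp
  have int_other: "int (card {a\<in>W0. a \<in> W}) = (Q - 1) * (Q - 1)" if W: "W \<in> Ov" "W \<noteq> W0" for W
  proof -
    have ovW: "ovoid P L I W" using W unfolding Ov_def by simp
    have fW: "finite W" "finite W0" using ov_finite ovW ov0 by auto
    have "\<not> W \<subseteq> W0"
    proof
      assume "W \<subseteq> W0"
      moreover have "card W = card W0" using cW W W0O by simp
      ultimately have "W = W0" using card_subset_eq[OF fW(2)] by blast
      then show False using W by simp
    qed
    then obtain x where x: "x \<in> W" "x \<notin> W0" by blast
    have d: "card (W - W0 - {x}) * s = (t + 1) * t" by (rule inter[OF ov0 ovW ts x])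
    have d2: "card (W - W0) = card (W - W0 - {x}) + 1"
      using x fW card.remove[of "W - W0" x] by simp
    have e: "{a\<in>W0. a \<in> W} = W \<inter> W0" by blast
    have d3: "card (W - W0) + card (W \<inter> W0) = card W"
    proof -
      have "card ((W - W0) \<union> (W \<inter> W0)) = card (W - W0) + card (W \<inter> W0)"
        by (rule card_Un_disjoint) (use fW in auto)
      moreover have "(W - W0) \<union> (W \<inter> W0) = W" by blast
      ultimately show ?thesis by simp
    qed
    have "card W = V" using cW W by simp
    define dd where "dd = card (W - W0 - {x})"
    define c where "c = card (W \<inter> W0)"
    have i1: "int dd * Q = (Q * Q - Q + 1) * (Q * Q - Q)"
      using arg_cong[OF d, of int] ti si unfolding dd_def by (simp add: algebra_simps)
    have i2: "int dd + 1 + int c = Q * (Q * Q - Q) + 1"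
      using d2 d3 \<open>card W = V\<close> Vi unfolding dd_def c_def by simp
    have "Q * int dd = Q * ((Q - 1) * (Q * Q - Q + 1))" using i1 by (simp add: algebra_simps)
    then have "int dd = (Q - 1) * (Q * Q - Q + 1)" using Q3 by simp
    then have "int c = (Q - 1) * (Q - 1)" using i2 by (simp add: algebra_simps)
    then show ?thesis unfolding e c_def .
  qed
  have E2: "int V + (int n - 1) * ((Q - 1) * (Q - 1)) = int V * int r"
  proof -
    have "(\<Sum>W\<in>Ov. card {a\<in>W0. a \<in> W}) = (\<Sum>a\<in>W0. card {W\<in>Ov. a \<in> W})"
      by (rule double_count[OF fO ov_finite[OF ov0]])
    also have "\<dots> = (\<Sum>a\<in>W0. r)" using rx ov_sub[OF ov0] by (intro sum.cong) auto
    also have "\<dots> = V * r" using cW[OF W0O] by simp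
    finally have s1: "(\<Sum>W\<in>Ov. int (card {a\<in>W0. a \<in> W})) = int V * int r"
      by (metis of_nat_mult of_nat_sum)
    have "(\<Sum>W\<in>Ov. int (card {a\<in>W0. a \<in> W})) = int (card {a\<in>W0. a \<in> W0}) + (\<Sum>W\<in>Ov - {W0}. int (card {a\<in>W0. a \<in> W}))"
      by (rule sum.remove[OF fO W0O])
    also have "(\<Sum>W\<in>Ov - {W0}. int (card {a\<in>W0. a \<in> W})) = (\<Sum>W\<in>Ov - {W0}. (Q - 1) * (Q - 1))"
      using int_other by (intro sum.cong) auto
    also have "\<dots> = (int n - 1) * ((Q - 1) * (Q - 1))"
    proof -
      have "card Ov \<ge> 1" using fO W0O card_gt_0_iff by (metis One_nat_def Suc_leI empty_iff)
      then show ?thesis using fO W0O unfolding n_def by (simp add: card_Diff_singleton_if of_nat_diff)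
    qed
    also have "int (card {a\<in>W0. a \<in> W0}) = int V" using cW[OF W0O] by simp
    finally show ?thesis using s1 by simp
  qed
  have "card (P - perp x0) > 0" using card_noncol[OF x0] q ts
    by (simp add: power2_eq_square)
  then obtain y0 where y0: "y0 \<in> P" "\<not> col x0 y0" unfolding perp_def
    by (metis (mono_tags, lifting) DiffE card.empty less_irrefl mem_Collect_eq ex_in_conv)
  have E3: "s dvd (t + 1) * r"
  proof -
    have fc: "finite (common x0 y0)" using finite_P unfolding common_def by simp
    have "(\<Sum>W\<in>Ov. card {z\<in>common x0 y0. z \<in> W}) = (\<Sum>z\<in>common x0 y0. card {W\<in>Ov. z \<in> W})"
      by (rule double_count[OF fO fc])
    also have "\<dots> = (\<Sum>z\<in>common x0 y0. r)" using rx unfolding common_def by (intro sum.cong) auto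
    also have "\<dots> = (t + 1) * r" using common_card[OF x0 y0] by simp
    finally have s1: "(\<Sum>W\<in>Ov. card {z\<in>common x0 y0. z \<in> W}) = (t + 1) * r" .
    have pw: "card {z\<in>common x0 y0. z \<in> W} = (if x0 \<notin> W \<and> y0 \<notin> W then s else 0)" if W: "W \<in> Ov" for W
    proof -
      have ovW: "ovoid P L I W" using W unfolding Ov_def by simp
      show ?thesis
      proof (cases "x0 \<in> W")
        case True
        have "{z\<in>common x0 y0. z \<in> W} = {}"
        proof (rule ccontr)
          assume "{z\<in>common x0 y0. z \<in> W} \<noteq> {}"
          then obtain z where z: "z \<in> W" "col x0 z" "col y0 z" unfolding common_def by blast
          then have "x0 = z" using ov_noncol[OF ovW True] by blast
          then show False using z y0 col_sym by blast
        qed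
        then have "card {z\<in>common x0 y0. z \<in> W} = 0" by (simp only: card.empty)
        then show ?thesis using True by simp
      next
        case F1: False
        show ?thesis
        proof (cases "y0 \<in> W")
          case True
          have "{z\<in>common x0 y0. z \<in> W} = {}"
          proof (rule ccontr)
            assume "{z\<in>common x0 y0. z \<in> W} \<noteq> {}"
            then obtain z where z: "z \<in> W" "col x0 z" "col y0 z" unfolding common_def by blast
            then have "y0 = z" using ov_noncol[OF ovW True] by blast
            then show False using z y0 col_sym by blast
          qed
          then have "card {z\<in>common x0 y0. z \<in> W} = 0" by (simp only: card.empty)
        then show ?thesis using True by simp
        next
          case F2: False
          have K: "\<forall>y\<in>{y\<in>P. y \<notin> W \<and> \<not> col x0 y}. card {a\<in>{a\<in>W. col x0 a}. col y a} = s"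
            by (rule key[OF ovW ts x0 F1])
          have "y0 \<in> {y\<in>P. y \<notin> W \<and> \<not> col x0 y}" using y0 F2 by blast
          then have "card {a\<in>{a\<in>W. col x0 a}. col y0 a} = s" using K by blast
          moreover have "{a\<in>{a\<in>W. col x0 a}. col y0 a} = {z\<in>common x0 y0. z \<in> W}"
            using ov_sub[OF ovW] unfolding common_def by blast
          ultimately show ?thesis using F1 F2 by simp
        qed
      qed
    qed
    have "(\<Sum>W\<in>Ov. card {z\<in>common x0 y0. z \<in> W}) = (\<Sum>W\<in>Ov. if x0 \<notin> W \<and> y0 \<notin> W then s else 0)"
      using pw by (intro sum.cong) auto
    also have "\<dots> = (\<Sum>W\<in>{W\<in>Ov. x0 \<notin> W \<and> y0 \<notin> W}. s)"
      by (rule sum.inter_filter[OF fO, symmetric])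
    also have "\<dots> = s * card {W\<in>Ov. x0 \<notin> W \<and> y0 \<notin> W}" by simp
    finally show ?thesis using s1 by (metis dvd_triv_left)
  qed
  have Vpos: "int V > 0" unfolding V_def by (simp del: of_nat_add of_nat_mult)
  have cPi: "int (card P) = (Q + 1) * int V" using card_P si unfolding V_def by (simp add: algebra_simps)
  have "int n * int V = int (card P) * int r" using arg_cong[OF E1, of int] by simp
  then have "int n * int V = ((Q + 1) * int r) * int V" unfolding cPi by (simp add: algebra_simps)
  then have Ni: "int n = (Q + 1) * int r" using Vpos by simp
  have h: "int V + (((Q + 1) * int r) - 1) * ((Q - 1) * (Q - 1)) = int V * int r"
    using E2 Ni by simp
  have "Q * int r = Q * (Q * Q - 2 * Q + 2)" using h unfolding Vi by algebra
  then have Ri: "int r = Q * Q - 2 * Q + 2" using Q3 by simp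
  have "int s dvd (int t + 1) * int r" using E3 by (metis of_nat_dvd_iff of_nat_mult of_nat_add of_nat_1)
  then have "Q dvd (Q * Q - Q + 1) * (Q * Q - 2 * Q + 2)" unfolding si ti Ri by simp
  moreover have "(Q * Q - Q + 1) * (Q * Q - 2 * Q + 2) = Q * (Q * Q * Q - 3 * Q * Q + 5 * Q - 4) + 2"
    by (simp add: algebra_simps)
  ultimately have "Q dvd 2" by (metis dvd_add_right_iff dvd_triv_left)
  then have "Q \<le> 2" by (simp add: zdvd_imp_le)
  then show False using Q3 by simp
qed

end

theorem lemma5p3:
  fixes P :: "'p set" and L :: "'l set" and I :: "'p \<Rightarrow> 'l \<Rightarrow> bool" and q :: nat
  assumes "q > 2"
    and "generalized_quadrangle P L I q (q^2 - q)"
    and "point_transitive P L I"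
  shows "\<not> (\<exists>Ov. ovoid P L I Ov)"
proof
  assume "\<exists>Ov. ovoid P L I Ov"
  then obtain W where W: "ovoid P L I W" by blast
  interpret gq P L I q "q^2 - q" by (rule gq.intro) (rule assms(2))
  show False by (rule main[OF assms(1) refl refl assms(3) W])
qed

end
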